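(* In the setting of the context, let $\Lambda:B\to B'$ be a CPTP map, and for a Choi matrix $J$ (of a channel $\mathcal{E}:A'\to B$) let $J'=(\mathrm{id}_{A'}\otimes\Lambda)(J)$ be the Choi matrix of $\Lambda\circ\mathcal{E}$, and define $\sigma^{g}_{J'},\sigma^{t}_{J'}$ on $AB'$ by the same formulas as $\rho^g_J,\rho^t_J$ with $J'$ in place of $J$. Assume: (a) there is a POVM $\{P'_c\}_{c\in\mathcal{C}'}$ on $AB'$ with $\Phi'_c[\sigma]=\operatorname{Tr}(P'_c\sigma)$ such that $\Phi'_c[(\mathrm{id}_A\otimes\Lambda)(\rho)]=\Phi_c[\rho]$ for all $c$ and all states $\rho$ on $AB$; (b) there are constants $\theta_1,\theta_2$, a subset $\mathcal{F}\subseteq\mathcal{C}'$, a POVM element $M^A$ on $A$ and projectors $\Pi^B$ on $B$, $\Pi^{B'}$ on $B'$ with $\operatorname{Tr}[(M^A\otimes\Pi^{B'})(\mathrm{id}_A\otimes\Lambda)(\rho)]=\operatorname{Tr}[(M^A\otimes\Pi^{B})\rho]$ for all $\rho$, such that $\sum_{c\in\mathcal{F}}\Phi_c[\rho]\ge\theta_1\big(\theta_2-\operatorname{Tr}[(M^A\otimes\Pi^B)\rho]\big)$ for all states $\rho$ on $AB$; (c) $\hat W$ is a real function on states of $AB'$ with $\hat W(\sigma^g_{J'})\le W(\rho^g_J)$ for every Choi matrix $J$. Then for every $\mathbf{g}\in\mathbb{R}^{|\mathcal{C}'|}$, every probability distribution $\mathbf{q}^{\mathrm{hon}}$ on $\mathcal{C}'$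 and every $\alpha\in(1,3/2)$, $$\inf_{J}\Big(W(\rho^{g}_J)+\mathbf{g}\cdot(\mathbf{q}^{\mathrm{hon}}-\boldsymbol\Phi[\rho^t_J])-c_\alpha\widetilde V(\boldsymbol\Phi[\rho^t_J],\mathbf{g})\Big)\ \ge\ \inf_{J'\in\mathcal{D}'}\Big(\hat W(\sigma^{g}_{J'})+\mathbf{g}\cdot(\mathbf{q}^{\mathrm{hon}}-\boldsymbol\Phi'[\sigma^t_{J'}])-c_\alpha\widetilde V(\boldsymbol\Phi'[\sigma^t_{J'}],\mathbf{g})\Big),$$ where the left infimum is over all Choi matrices $J$ on $A'B$, $c_\alpha=\frac{\alpha-1}{2-\alpha}\frac{\ln 2}{2}$, and $$\mathcal{D}'=\Big\{J'\ge0 \text{ on } A'B' : \operatorname{Tr}_{B'}J'=\mathbb{1}_{A'},\ \sum_{c\in\mathcal{F}}\Phi'_c[\sigma^t_{J'}]\ge\theta_1\big(\theta_2-\operatorname{Tr}[(M^A\otimes\Pi^{B'})\sigma^t_{J'}]\big)\Big\}.$$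
   Context: $A,A',B,B'$ are finite-dimensional systems, $\ket{\xi^g},\ket{\xi^t}$ pure states on $AA'$. A Choi matrix is $J\ge0$ on $A'B$ with $\operatorname{Tr}_B J=\mathbb{1}_{A'}$, and $\rho^{g}_J=\operatorname{Tr}_{A'}[(\mathbb{1}_A\otimes J)(\ket{\xi^g}\!\bra{\xi^g}^{T_{A'}}\otimes\mathbb{1}_B)]$, $\rho^{t}_J$ likewise with $\xi^t$. $W$ is a real-valued function of states on $AB$; $\mathcal{C}'$ is a finite alphabet, $\Phi_c[\rho]=\operatorname{Tr}(P_c\rho)$ for a POVM $\{P_c\}_{c\in\mathcal{C}'}$ on $AB$, $\boldsymbol\Phi=(\Phi_c)_c$. Given $\gamma\in(0,1]$, an integer $d_A\ge1$ and $\kappa\in\{1,2\}$, for a distribution $\mathbf{q}$ on $\mathcal{C}'$ and $\mathbf{g}\in\mathbb{R}^{|\mathcal{C}'|}$, $$\widetilde V(\mathbf{q},\mathbf{g})=\Big(\log_2(1+2d_A^\kappa)+\sqrt{2+\sum_{c}\tfrac{q_c}{\gamma}(\max(\mathbf{g})-g_c)^2-(\max(\mathbf{g})-\mathbf{g}\cdot\mathbf{q})^2}\Big)^2.$$ *)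

theory Defs
  imports Complex_Main "HOL-Library.Extended_Real"
begin

text \<open>Operators on a finite-dimensional Hilbert space with orthonormal basis indexed by
  a finite type are represented by their matrices, i.e. functions of two basis indices.
  Composite systems are indexed by product types.\<close>

type_synonym 'a cmat = "'a \<Rightarrow> 'a \<Rightarrow> complex"

definition idm :: "'a cmat" where
  "idm = (\<lambda>i j. if i = j then 1 else 0)"

definition mmult :: "'a::finite cmat \<Rightarrow> 'a cmat \<Rightarrow> 'a cmat" where
  "mmult M N = (\<lambda>i k. \<Sum>j\<in>UNIV. M i j * N j k)"

definition trace :: "'a::finite cmat \<Rightarrow> complex" where
  "trace M = (\<Sum>i\<in>UNIV. M i i)"

definition psd :: "'a::finite cmat \<Rightarrow> bool" where
  "psd M \<longleftrightarrow> (\<forall>v :: 'a \<Rightarrow> complex.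
      Im (\<Sum>i\<in>UNIV. \<Sum>j\<in>UNIV. cnj (v i) * M i j * v j) = 0 \<and>
      Re (\<Sum>i\<in>UNIV. \<Sum>j\<in>UNIV. cnj (v i) * M i j * v j) \<ge> 0)"

definition is_state :: "'a::finite cmat \<Rightarrow> bool" where
  "is_state \<rho> \<longleftrightarrow> psd \<rho> \<and> trace \<rho> = 1"

definition is_projector :: "'a::finite cmat \<Rightarrow> bool" where
  "is_projector P \<longleftrightarrow> mmult P P = P \<and> (\<forall>i j. P i j = cnj (P j i))"

definition is_povm_element :: "'a::finite cmat \<Rightarrow> bool" where
  "is_povm_element M \<longleftrightarrow> psd M \<and> psd (\<lambda>i j. idm i j - M i j)"

definition is_povm :: "('c::finite \<Rightarrow> 'a::finite cmat) \<Rightarrow> bool" where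
  "is_povm P \<longleftrightarrow> (\<forall>c. psd (P c)) \<and> (\<lambda>i j. \<Sum>c\<in>UNIV. P c i j) = idm"

definition kron :: "'a cmat \<Rightarrow> 'b cmat \<Rightarrow> ('a \<times> 'b) cmat" where
  "kron M N = (\<lambda>(i, j) (k, l). M i k * N j l)"

definition ptrace_snd :: "('a \<times> 'b::finite) cmat \<Rightarrow> 'a cmat" where
  "ptrace_snd M = (\<lambda>a c. \<Sum>b\<in>UNIV. M (a, b) (c, b))"

definition ptrace_mid :: "(('a \<times> 'x::finite) \<times> 'b) cmat \<Rightarrow> ('a \<times> 'b) cmat" where
  "ptrace_mid M = (\<lambda>(a, b) (c, d). \<Sum>x\<in>UNIV. M ((a, x), b) ((c, x), d))"

definition ptranspose_snd :: "('a \<times> 'b) cmat \<Rightarrow> ('a \<times> 'b) cmat" where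
  "ptranspose_snd X = (\<lambda>(a, a') (b, b'). X (a, b') (b, a'))"

definition assocL :: "('a \<times> ('x \<times> 'b)) cmat \<Rightarrow> (('a \<times> 'x) \<times> 'b) cmat" where
  "assocL M = (\<lambda>((a, x), b) ((c, y), d). M (a, (x, b)) (c, (y, d)))"

definition ketbra :: "('a \<Rightarrow> complex) \<Rightarrow> 'a cmat" where
  "ketbra \<xi> = (\<lambda>i j. \<xi> i * cnj (\<xi> j))"

definition pure_state :: "('a::finite \<Rightarrow> complex) \<Rightarrow> bool" where
  "pure_state \<xi> \<longleftrightarrow> (\<Sum>i\<in>UNIV. (cmod (\<xi> i))\<^sup>2) = 1"

definition is_choi :: "('a2::finite \<times> 'b::finite) cmat \<Rightarrow> bool" where
  "is_choi J \<longleftrightarrow> psd J \<and> ptrace_snd J = idm"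

text \<open>\<open>\<rho>_J = Tr_{A'}[(1_A \<otimes> J)(|\<xi>\<rangle>\<langle>\<xi>|^{T_{A'}} \<otimes> 1_B)]\<close> on \<open>AB\<close>.\<close>
definition rhoJ :: "('a::finite \<times> 'a2::finite \<Rightarrow> complex) \<Rightarrow> ('a2 \<times> 'b::finite) cmat
                   \<Rightarrow> ('a \<times> 'b) cmat" where
  "rhoJ \<xi> J = ptrace_mid (mmult (assocL (kron idm J)) (kron (ptranspose_snd (ketbra \<xi>)) idm))"

text \<open>\<open>\<Phi>_c[\<rho>] = Tr(P_c \<rho>)\<close> (real for the states considered; we take the real part).\<close>
definition Phi :: "('c \<Rightarrow> 'x::finite cmat) \<Rightarrow> 'x cmat \<Rightarrow> 'c \<Rightarrow> real" where
  "Phi P \<rho> = (\<lambda>c. Re (trace (mmult (P c) \<rho>)))"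

definition id_tensor :: "('b cmat \<Rightarrow> 'b2 cmat) \<Rightarrow> ('x \<times> 'b) cmat \<Rightarrow> ('x \<times> 'b2) cmat" where
  "id_tensor \<Lambda> M = (\<lambda>(x, b) (y, d). \<Lambda> (\<lambda>b0 d0. M (x, b0) (y, d0)) b d)"

definition linear_map :: "('b cmat \<Rightarrow> 'b2 cmat) \<Rightarrow> bool" where
  "linear_map \<Lambda> \<longleftrightarrow>
     (\<forall>X Y. \<Lambda> (\<lambda>i j. X i j + Y i j) = (\<lambda>i j. \<Lambda> X i j + \<Lambda> Y i j)) \<and>
     (\<forall>a X. \<Lambda> (\<lambda>i j. a * X i j) = (\<lambda>i j. a * \<Lambda> X i j))"

text \<open>Positive semidefiniteness of an operator on \<open>\<complex>^n \<otimes> H_B\<close>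
  (ancilla basis \<open>{0..<n}\<close>), used to define complete positivity.\<close>
definition psd_anc :: "nat \<Rightarrow> (nat \<times> 'b::finite) cmat \<Rightarrow> bool" where
  "psd_anc n M \<longleftrightarrow> (\<forall>v :: nat \<times> 'b \<Rightarrow> complex.
     Im (\<Sum>i<n. \<Sum>j<n. \<Sum>b\<in>UNIV. \<Sum>d\<in>UNIV. cnj (v (i, b)) * M (i, b) (j, d) * v (j, d)) = 0 \<and>
     Re (\<Sum>i<n. \<Sum>j<n. \<Sum>b\<in>UNIV. \<Sum>d\<in>UNIV. cnj (v (i, b)) * M (i, b) (j, d) * v (j, d)) \<ge> 0)"

definition completely_positive :: "('b::finite cmat \<Rightarrow> 'b2::finite cmat) \<Rightarrow> bool" where
  "completely_positive \<Lambda> \<longleftrightarrow> (\<forall>n M. psd_anc n M \<longrightarrow> psd_anc n (id_tensor \<Lambda> M))"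

definition trace_preserving :: "('b::finite cmat \<Rightarrow> 'b2::finite cmat) \<Rightarrow> bool" where
  "trace_preserving \<Lambda> \<longleftrightarrow> (\<forall>X. trace (\<Lambda> X) = trace X)"

definition cptp :: "('b::finite cmat \<Rightarrow> 'b2::finite cmat) \<Rightarrow> bool" where
  "cptp \<Lambda> \<longleftrightarrow> linear_map \<Lambda> \<and> completely_positive \<Lambda> \<and> trace_preserving \<Lambda>"

definition is_distribution :: "('c::finite \<Rightarrow> real) \<Rightarrow> bool" where
  "is_distribution q \<longleftrightarrow> (\<forall>c. q c \<ge> 0) \<and> (\<Sum>c\<in>UNIV. q c) = 1"

definition Vtilde :: "real \<Rightarrow> nat \<Rightarrow> nat \<Rightarrow> ('c::finite \<Rightarrow> real) \<Rightarrow> ('c \<Rightarrow> real) \<Rightarrow> real" where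
  "Vtilde \<gamma> dA \<kappa> q g =
     (let mg = Max (range g) in
      (log 2 (1 + 2 * real dA ^ \<kappa>) +
       sqrt (2 + (\<Sum>c\<in>UNIV. q c / \<gamma> * (mg - g c)\<^sup>2) - (mg - (\<Sum>c\<in>UNIV. g c * q c))\<^sup>2))\<^sup>2)"

definition c_alpha :: "real \<Rightarrow> real" where
  "c_alpha \<alpha> = (\<alpha> - 1) / (2 - \<alpha>) * ln 2 / 2"


end

theory Submission imports Defs begin
lemma sum_prod_univ: "(\<Sum>p\<in>(UNIV::('x::finite\<times>'y::finite) set). f p) = (\<Sum>x\<in>UNIV. \<Sum>y\<in>UNIV. f (x,y))"
  using sum.cartesian_product[of "\<lambda>x y. f (x,y)" UNIV UNIV] by simp
lemma idm_sum: "(\<Sum>j\<in>UNIV. idm i j * f j) = f (i::'a::finite)"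
proof -
  have "(\<Sum>j\<in>UNIV. idm i j * f j) = (\<Sum>j\<in>UNIV. if i = j then f j else 0)"
    by (rule sum.cong) (simp_all add: idm_def)
  thus ?thesis by simp
qed
lemma idm_sum_r: "(\<Sum>j\<in>UNIV. f j * idm j i) = f (i::'a::finite)"
proof -
  have "(\<Sum>j\<in>UNIV. f j * idm j i) = (\<Sum>j\<in>UNIV. if i = j then f j else 0)"
    by (rule sum.cong) (simp_all add: idm_def)
  thus ?thesis by simp
qed
lemma idm_sum_r2: "(\<Sum>j\<in>UNIV. f j * idm i j) = f (i::'a::finite)"
proof -
  have "(\<Sum>j\<in>UNIV. f j * idm i j) = (\<Sum>j\<in>UNIV. if i = j then f j else 0)"
    by (rule sum.cong) (simp_all add: idm_def)
  thus ?thesis by simp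
qed
lemma A_eq: "assocL (kron idm J) ((a,x),b) ((a',y),b') = idm a a' * J (x,b) (y,b')"
  by (simp add: assocL_def kron_def)
lemma B_eq: "kron (ptranspose_snd (ketbra \<xi>)) idm ((a',y),b') ((c,x),d) = \<xi>(a',x) * cnj (\<xi>(c,y)) * idm b' d"
  by (simp add: ptranspose_snd_def kron_def ketbra_def)
lemma rhoJ_eq: "rhoJ \<xi> (J::('a2::finite\<times>'b::finite) cmat) (a::'a::finite,b) (c,d) = (\<Sum>x\<in>UNIV. \<Sum>y\<in>UNIV. \<xi> (a,x) * cnj (\<xi> (c,y)) * J (x,b) (y,d))"
proof -
  have "rhoJ \<xi> J (a,b) (c,d) = (\<Sum>x\<in>UNIV. \<Sum>a'\<in>UNIV. \<Sum>y\<in>UNIV. \<Sum>b'\<in>UNIV.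
      idm a a' * (J (x,b) (y,b') * \<xi>(a',x) * cnj (\<xi>(c,y)) * idm b' d))"
    unfolding rhoJ_def ptrace_mid_def mmult_def
    by (simp only: split_conv sum_prod_univ A_eq B_eq mult.assoc)
  also have "\<dots> = (\<Sum>x\<in>UNIV. \<Sum>y\<in>UNIV. \<Sum>b'\<in>UNIV. (J (x,b) (y,b') * \<xi>(a,x) * cnj (\<xi>(c,y))) * idm b' d)"
    by (simp only: sum_distrib_left[symmetric] idm_sum)
  also have "\<dots> = (\<Sum>x\<in>UNIV. \<Sum>y\<in>UNIV. \<xi> (a,x) * cnj (\<xi> (c,y)) * J (x,b) (y,d))"
    by (simp only: idm_sum_r) (simp add: mult_ac)
  finally show ?thesis .
qed

lemma lin_zero: "linear_map \<Lambda> \<Longrightarrow> \<Lambda> (\<lambda>i j. 0) = (\<lambda>i j. 0)"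
proof -
  assume "linear_map \<Lambda>"
  then have "\<forall>a X. \<Lambda> (\<lambda>i j. a * X i j) = (\<lambda>i j. a * \<Lambda> X i j)"
    unfolding linear_map_def by (rule conjunct2)
  then have "\<Lambda> (\<lambda>i j. 0 * (\<lambda>i j. 0) i j) = (\<lambda>i j. 0 * \<Lambda> (\<lambda>i j. 0) i j)"
    by (rule allE) (rule allE)
  then show ?thesis by simp
qed
lemma lin_sum: assumes "linear_map \<Lambda>" "finite S"
  shows "\<Lambda> (\<lambda>i j. \<Sum>k\<in>S. f k i j) = (\<lambda>i j. \<Sum>k\<in>S. \<Lambda> (f k) i j)"
  using assms(2)
proof (induction S rule: finite_induct)
  case empty then show ?case using lin_zero[OF assms(1)] by simp
next
  case (insert x F)
  have "\<Lambda> (\<lambda>i j. \<Sum>k\<in>insert x F. f k i j) = \<Lambda> (\<lambda>i j. f x i j + (\<lambda>i j. \<Sum>k\<in>F. f k i j) i j)"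
    using insert by simp
  also have "\<dots> = (\<lambda>i j. \<Lambda> (f x) i j + \<Lambda> (\<lambda>i j. \<Sum>k\<in>F. f k i j) i j)"
  proof -
    have "\<forall>X Y. \<Lambda> (\<lambda>i j. X i j + Y i j) = (\<lambda>i j. \<Lambda> X i j + \<Lambda> Y i j)"
      using assms(1) unfolding linear_map_def by (rule conjunct1)
    then show ?thesis by (rule allE) (rule allE)
  qed
  finally show ?case using insert by simp
qed
lemma lin_scale: "linear_map \<Lambda> \<Longrightarrow> \<Lambda> (\<lambda>i j. a * X i j) = (\<lambda>i j. a * \<Lambda> X i j)"
proof -
  assume "linear_map \<Lambda>"
  then have "\<forall>a X. \<Lambda> (\<lambda>i j. a * X i j) = (\<lambda>i j. a * \<Lambda> X i j)"
    unfolding linear_map_def by (rule conjunct2)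
  then show ?thesis by (rule allE) (rule allE)
qed

lemma rho_commute: fixes \<Lambda> :: "'b::finite cmat \<Rightarrow> 'b2::finite cmat" assumes L: "linear_map \<Lambda>"
  shows "rhoJ \<xi> (id_tensor \<Lambda> (J::('a2::finite\<times>'b) cmat)) = id_tensor \<Lambda> (rhoJ (\<xi>::'a::finite\<times>'a2\<Rightarrow>complex) J)"
proof (intro ext)
  fix p q :: "'a \<times> 'b2"
  obtain a b where p: "p = (a,b)" by force
  obtain c d where q: "q = (c,d)" by force
  have e1: "\<Lambda> (\<lambda>b0 d0. \<Sum>x\<in>UNIV. \<Sum>y\<in>UNIV. \<xi> (a,x) * cnj (\<xi> (c,y)) * J (x,b0) (y,d0))
     = (\<lambda>b0 d0. \<Sum>x\<in>UNIV. \<Lambda> (\<lambda>b0 d0. \<Sum>y\<in>UNIV. \<xi> (a,x) * cnj (\<xi> (c,y)) * J (x,b0) (y,d0)) b0 d0)"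
    using lin_sum[OF L finite_UNIV, of "\<lambda>x b0 d0. \<Sum>y\<in>UNIV. \<xi> (a,x) * cnj (\<xi> (c,y)) * J (x,b0) (y,d0)"] by simp
  have e2: "\<And>x. \<Lambda> (\<lambda>b0 d0. \<Sum>y\<in>UNIV. \<xi> (a,x) * cnj (\<xi> (c,y)) * J (x,b0) (y,d0))
     = (\<lambda>b0 d0. \<Sum>y\<in>UNIV. \<Lambda> (\<lambda>b0 d0. \<xi> (a,x) * cnj (\<xi> (c,y)) * J (x,b0) (y,d0)) b0 d0)"
    subgoal for x
    using lin_sum[OF L finite_UNIV, of "\<lambda>y b0 d0. \<xi> (a,x) * cnj (\<xi> (c,y)) * J (x,b0) (y,d0)"] by simp
    done
  have e3: "\<And>x y. \<Lambda> (\<lambda>b0 d0. \<xi> (a,x) * cnj (\<xi> (c,y)) * J (x,b0) (y,d0))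
      = (\<lambda>b0 d0. \<xi> (a,x) * cnj (\<xi> (c,y)) * \<Lambda> (\<lambda>b0 d0. J (x,b0) (y,d0)) b0 d0)"
    subgoal for x y
      using lin_scale[OF L, of "\<xi> (a,x) * cnj (\<xi> (c,y))" "\<lambda>b0 d0. J (x,b0) (y,d0)"] by simp
    done
  have "id_tensor \<Lambda> (rhoJ \<xi> J) (a,b) (c,d) =
     \<Lambda> (\<lambda>b0 d0. \<Sum>x\<in>UNIV. \<Sum>y\<in>UNIV. \<xi> (a,x) * cnj (\<xi> (c,y)) * J (x,b0) (y,d0)) b d"
    by (simp add: id_tensor_def rhoJ_eq)
  also have "\<dots> = (\<Sum>x\<in>UNIV. \<Sum>y\<in>UNIV. \<xi> (a,x) * cnj (\<xi> (c,y)) * \<Lambda> (\<lambda>b0 d0. J (x,b0) (y,d0)) b d)"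
    by (simp only: e1 e2 e3)
  also have "\<dots> = rhoJ \<xi> (id_tensor \<Lambda> J) (a,b) (c,d)"
    by (simp add: id_tensor_def rhoJ_eq)
  finally show "rhoJ \<xi> (id_tensor \<Lambda> J) p q = id_tensor \<Lambda> (rhoJ \<xi> J) p q" using p q by simp
qed

lemma perm6: fixes E :: "'a::finite \<Rightarrow> 'b::finite \<Rightarrow> 'c::finite \<Rightarrow> 'd::finite \<Rightarrow> 'x::finite \<Rightarrow> 'y::finite \<Rightarrow> complex"
  shows "(\<Sum>a\<in>UNIV. \<Sum>b\<in>UNIV. \<Sum>c\<in>UNIV. \<Sum>d\<in>UNIV. \<Sum>x\<in>UNIV. \<Sum>y\<in>UNIV. E a b c d x y)
       = (\<Sum>x\<in>UNIV. \<Sum>b\<in>UNIV. \<Sum>y\<in>UNIV. \<Sum>d\<in>UNIV. \<Sum>c\<in>UNIV. \<Sum>a\<in>UNIV. E a b c d x y)"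
proof -
  note C = sum.cong[OF refl]
  have "(\<Sum>a\<in>UNIV. \<Sum>b\<in>UNIV. \<Sum>c\<in>UNIV. \<Sum>d\<in>UNIV. \<Sum>x\<in>UNIV. \<Sum>y\<in>UNIV. E a b c d x y)
      = (\<Sum>a\<in>UNIV. \<Sum>b\<in>UNIV. \<Sum>c\<in>UNIV. \<Sum>x\<in>UNIV. \<Sum>d\<in>UNIV. \<Sum>y\<in>UNIV. E a b c d x y)"
    by (rule C, rule C, rule C, rule sum.swap)
  also have "\<dots> = (\<Sum>a\<in>UNIV. \<Sum>b\<in>UNIV. \<Sum>x\<in>UNIV. \<Sum>c\<in>UNIV. \<Sum>d\<in>UNIV. \<Sum>y\<in>UNIV. E a b c d x y)"
    by (rule C, rule C, rule sum.swap)
  also have "\<dots> = (\<Sum>a\<in>UNIV. \<Sum>x\<in>UNIV. \<Sum>b\<in>UNIV. \<Sum>c\<in>UNIV. \<Sum>d\<in>UNIV. \<Sum>y\<in>UNIV. E a b c d x y)"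
    by (rule C, rule sum.swap)
  also have "\<dots> = (\<Sum>x\<in>UNIV. \<Sum>a\<in>UNIV. \<Sum>b\<in>UNIV. \<Sum>c\<in>UNIV. \<Sum>d\<in>UNIV. \<Sum>y\<in>UNIV. E a b c d x y)"
    by (rule sum.swap)
  also have "\<dots> = (\<Sum>x\<in>UNIV. \<Sum>b\<in>UNIV. \<Sum>a\<in>UNIV. \<Sum>c\<in>UNIV. \<Sum>d\<in>UNIV. \<Sum>y\<in>UNIV. E a b c d x y)"
    by (rule C, rule sum.swap)
  also have "\<dots> = (\<Sum>x\<in>UNIV. \<Sum>b\<in>UNIV. \<Sum>a\<in>UNIV. \<Sum>c\<in>UNIV. \<Sum>y\<in>UNIV. \<Sum>d\<in>UNIV. E a b c d x y)"
    by (rule C, rule C, rule C, rule C, rule sum.swap)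
  also have "\<dots> = (\<Sum>x\<in>UNIV. \<Sum>b\<in>UNIV. \<Sum>a\<in>UNIV. \<Sum>y\<in>UNIV. \<Sum>c\<in>UNIV. \<Sum>d\<in>UNIV. E a b c d x y)"
    by (rule C, rule C, rule C, rule sum.swap)
  also have "\<dots> = (\<Sum>x\<in>UNIV. \<Sum>b\<in>UNIV. \<Sum>y\<in>UNIV. \<Sum>a\<in>UNIV. \<Sum>c\<in>UNIV. \<Sum>d\<in>UNIV. E a b c d x y)"
    by (rule C, rule C, rule sum.swap)
  also have "\<dots> = (\<Sum>x\<in>UNIV. \<Sum>b\<in>UNIV. \<Sum>y\<in>UNIV. \<Sum>a\<in>UNIV. \<Sum>d\<in>UNIV. \<Sum>c\<in>UNIV. E a b c d x y)"
    by (rule C, rule C, rule C, rule C, rule sum.swap)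
  also have "\<dots> = (\<Sum>x\<in>UNIV. \<Sum>b\<in>UNIV. \<Sum>y\<in>UNIV. \<Sum>d\<in>UNIV. \<Sum>a\<in>UNIV. \<Sum>c\<in>UNIV. E a b c d x y)"
    by (rule C, rule C, rule C, rule sum.swap)
  also have "\<dots> = (\<Sum>x\<in>UNIV. \<Sum>b\<in>UNIV. \<Sum>y\<in>UNIV. \<Sum>d\<in>UNIV. \<Sum>c\<in>UNIV. \<Sum>a\<in>UNIV. E a b c d x y)"
    by (rule C, rule C, rule C, rule C, rule sum.swap)
  finally show ?thesis .
qed

lemma psd_rho: assumes "psd (J::('a2::finite\<times>'b::finite) cmat)"
  shows "psd (rhoJ (\<xi>::'a::finite\<times>'a2\<Rightarrow>complex) J)"
  unfolding psd_def
proof (intro allI)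
  fix v :: "'a\<times>'b \<Rightarrow> complex"
  define w where "w = (\<lambda>(y,d). \<Sum>c\<in>UNIV. cnj (\<xi> (c,y)) * v (c,d))"
  have "(\<Sum>i\<in>UNIV. \<Sum>j\<in>UNIV. cnj (v i) * rhoJ \<xi> J i j * v j)
     = (\<Sum>a\<in>UNIV. \<Sum>b\<in>UNIV. \<Sum>c\<in>UNIV. \<Sum>d\<in>UNIV. \<Sum>x\<in>UNIV. \<Sum>y\<in>UNIV.
          (\<xi> (a,x) * cnj (v (a,b))) * J (x,b) (y,d) * (cnj (\<xi> (c,y)) * v (c,d)))"
    by (simp add: sum_prod_univ rhoJ_eq sum_distrib_left sum_distrib_right mult_ac)
  also have "\<dots> = (\<Sum>x\<in>UNIV. \<Sum>b\<in>UNIV. \<Sum>y\<in>UNIV. \<Sum>d\<in>UNIV. \<Sum>c\<in>UNIV. \<Sum>a\<in>UNIV.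
          (\<xi> (a,x) * cnj (v (a,b))) * J (x,b) (y,d) * (cnj (\<xi> (c,y)) * v (c,d)))"
    by (rule perm6)
  also have "\<dots> = (\<Sum>i\<in>UNIV. \<Sum>j\<in>UNIV. cnj (w i) * J i j * w j)"
    by (simp add: sum_prod_univ w_def sum_distrib_left sum_distrib_right)
  finally have eq: "(\<Sum>i\<in>UNIV. \<Sum>j\<in>UNIV. cnj (v i) * rhoJ \<xi> J i j * v j) = (\<Sum>i\<in>UNIV. \<Sum>j\<in>UNIV. cnj (w i) * J i j * w j)" .
  show "Im (\<Sum>i\<in>UNIV. \<Sum>j\<in>UNIV. cnj (v i) * rhoJ \<xi> J i j * v j) = 0 \<and>
        0 \<le> Re (\<Sum>i\<in>UNIV. \<Sum>j\<in>UNIV. cnj (v i) * rhoJ \<xi> J i j * v j)"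
    unfolding eq using assms unfolding psd_def by blast
qed

lemma trace_rho: assumes "pure_state \<xi>" "ptrace_snd (J::('a2::finite\<times>'b::finite) cmat) = idm"
  shows "trace (rhoJ (\<xi>::'a::finite\<times>'a2\<Rightarrow>complex) J) = 1"
proof -
  note C = sum.cong[OF refl]
  have pt: "\<And>x y. (\<Sum>b\<in>UNIV. J (x,b) (y,b)) = idm x y"
  proof -
    fix x y
    have "(\<Sum>b\<in>UNIV. J (x,b) (y,b)) = ptrace_snd J x y" by (simp add: ptrace_snd_def)
    then show "(\<Sum>b\<in>UNIV. J (x,b) (y,b)) = idm x y" using assms(2) by simp
  qed
  have "trace (rhoJ \<xi> J) = (\<Sum>a\<in>UNIV. \<Sum>b\<in>UNIV. \<Sum>x\<in>UNIV. \<Sum>y\<in>UNIV. \<xi> (a,x) * cnj (\<xi> (a,y)) * J (x,b) (y,b))"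
    by (simp add: trace_def sum_prod_univ rhoJ_eq)
  also have "\<dots> = (\<Sum>a\<in>UNIV. \<Sum>x\<in>UNIV. \<Sum>b\<in>UNIV. \<Sum>y\<in>UNIV. \<xi> (a,x) * cnj (\<xi> (a,y)) * J (x,b) (y,b))"
    by (rule C, rule sum.swap)
  also have "\<dots> = (\<Sum>a\<in>UNIV. \<Sum>x\<in>UNIV. \<Sum>y\<in>UNIV. \<Sum>b\<in>UNIV. \<xi> (a,x) * cnj (\<xi> (a,y)) * J (x,b) (y,b))"
    by (rule C, rule C, rule sum.swap)
  also have "\<dots> = (\<Sum>a\<in>UNIV. \<Sum>x\<in>UNIV. \<Sum>y\<in>UNIV. \<xi> (a,x) * cnj (\<xi> (a,y)) * idm x y)"
    by (simp only: sum_distrib_left[symmetric] pt)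
  also have "\<dots> = (\<Sum>a\<in>UNIV. \<Sum>x\<in>UNIV. \<xi> (a,x) * cnj (\<xi> (a,x)))"
    by (simp only: idm_sum_r2)
  also have "\<dots> = (\<Sum>a\<in>UNIV. \<Sum>x\<in>UNIV. complex_of_real ((cmod (\<xi> (a,x)))\<^sup>2))"
    by (simp only: complex_norm_square)
  also have "\<dots> = complex_of_real (\<Sum>p\<in>UNIV. (cmod (\<xi> p))\<^sup>2)"
    by (simp add: sum_prod_univ)
  also have "\<dots> = 1" using assms(1) unfolding pure_state_def by simp
  finally show ?thesis .
qed

lemma reidx: "bij_betw h {..<n} (UNIV::'x set) \<Longrightarrow> (\<Sum>i<n. f (h i)) = (\<Sum>x\<in>UNIV. f x)"
  by (rule sum.reindex_bij_betw)

lemma psd_form: "(\<Sum>p\<in>UNIV. \<Sum>q\<in>UNIV. cnj (v p) * (M::('x::finite\<times>'b::finite) cmat) p q * v q)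
   = (\<Sum>x\<in>UNIV. \<Sum>y\<in>UNIV. \<Sum>b\<in>UNIV. \<Sum>d\<in>UNIV. cnj (v (x,b)) * M (x,b) (y,d) * v (y,d))"
proof -
  have "(\<Sum>p\<in>UNIV. \<Sum>q\<in>UNIV. cnj (v p) * M p q * v q)
     = (\<Sum>x\<in>UNIV. \<Sum>b\<in>UNIV. \<Sum>y\<in>UNIV. \<Sum>d\<in>UNIV. cnj (v (x,b)) * M (x,b) (y,d) * v (y,d))"
    by (simp add: sum_prod_univ)
  also have "\<dots> = (\<Sum>x\<in>UNIV. \<Sum>y\<in>UNIV. \<Sum>b\<in>UNIV. \<Sum>d\<in>UNIV. cnj (v (x,b)) * M (x,b) (y,d) * v (y,d))"
    by (rule sum.cong[OF refl], rule sum.swap)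
  finally show ?thesis .
qed

lemma choi_tensor: fixes \<Lambda> :: "'b::finite cmat \<Rightarrow> 'b2::finite cmat"
  assumes L: "cptp \<Lambda>" and J: "is_choi (J::('a2::finite\<times>'b) cmat)"
  shows "psd (id_tensor \<Lambda> J) \<and> ptrace_snd (id_tensor \<Lambda> J) = idm"
proof
  have tp: "\<And>X. trace (\<Lambda> X) = trace X" using L unfolding cptp_def trace_preserving_def by simp
  have cp: "\<And>n M. psd_anc n M \<Longrightarrow> psd_anc n (id_tensor \<Lambda> M)"
    using L unfolding cptp_def completely_positive_def by simp
  show "ptrace_snd (id_tensor \<Lambda> J) = idm"
  proof (intro ext)
    fix x y
    have "ptrace_snd (id_tensor \<Lambda> J) x y = trace (\<Lambda> (\<lambda>b0 d0. J (x,b0) (y,d0)))"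
      by (simp add: ptrace_snd_def id_tensor_def trace_def)
    also have "\<dots> = trace (\<lambda>b0 d0. J (x,b0) (y,d0))" by (rule tp)
    also have "\<dots> = ptrace_snd J x y" by (simp add: ptrace_snd_def trace_def)
    finally show "ptrace_snd (id_tensor \<Lambda> J) x y = idm x y" using J unfolding is_choi_def by simp
  qed
  define n where "n = card (UNIV::'a2 set)"
  obtain h where h: "bij_betw h {..<n} (UNIV::'a2 set)"
    using ex_bij_betw_nat_finite[OF finite_UNIV[where 'a='a2]] unfolding n_def atLeast0LessThan by (elim exE)
  have hinv: "\<And>i. i < n \<Longrightarrow> inv_into {..<n} h (h i) = i"
    using h by (simp add: bij_betw_def)
  define M :: "(nat \<times> 'b) cmat" where "M = (\<lambda>(i,b) (j,d). J (h i, b) (h j, d))"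
  have psdJ: "psd J" using J unfolding is_choi_def by simp
  have "psd_anc n M"
    unfolding psd_anc_def
  proof (intro allI)
    fix v :: "nat \<times> 'b \<Rightarrow> complex"
    define u where "u = (\<lambda>(x,b). v (inv_into {..<n} h x, b))"
    have "(\<Sum>i<n. \<Sum>j<n. \<Sum>b\<in>UNIV. \<Sum>d\<in>UNIV. cnj (v (i, b)) * M (i, b) (j, d) * v (j, d))
       = (\<Sum>i<n. \<Sum>j<n. \<Sum>b\<in>UNIV. \<Sum>d\<in>UNIV. cnj (u (h i, b)) * J (h i, b) (h j, d) * u (h j, d))"
      by (intro sum.cong refl) (simp add: u_def M_def hinv)
    also have "\<dots> = (\<Sum>i<n. \<Sum>y\<in>UNIV. \<Sum>b\<in>UNIV. \<Sum>d\<in>UNIV. cnj (u (h i, b)) * J (h i, b) (y, d) * u (y, d))"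
      apply (rule sum.cong[OF refl])
      subgoal for i by (rule reidx[OF h, where f="\<lambda>y. \<Sum>b\<in>UNIV. \<Sum>d\<in>UNIV. cnj (u (h i, b)) * J (h i, b) (y, d) * u (y, d)"])
      done
    also have "\<dots> = (\<Sum>x\<in>UNIV. \<Sum>y\<in>UNIV. \<Sum>b\<in>UNIV. \<Sum>d\<in>UNIV. cnj (u (x, b)) * J (x, b) (y, d) * u (y, d))"
      by (rule reidx[OF h, where f="\<lambda>x. \<Sum>y\<in>UNIV. \<Sum>b\<in>UNIV. \<Sum>d\<in>UNIV. cnj (u (x, b)) * J (x, b) (y, d) * u (y, d)"])
    also have "\<dots> = (\<Sum>p\<in>UNIV. \<Sum>q\<in>UNIV. cnj (u p) * J p q * u q)" by (rule psd_form[symmetric])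
    finally have eq: "(\<Sum>i<n. \<Sum>j<n. \<Sum>b\<in>UNIV. \<Sum>d\<in>UNIV. cnj (v (i, b)) * M (i, b) (j, d) * v (j, d))
       = (\<Sum>p\<in>UNIV. \<Sum>q\<in>UNIV. cnj (u p) * J p q * u q)" .
    show "Im (\<Sum>i<n. \<Sum>j<n. \<Sum>b\<in>UNIV. \<Sum>d\<in>UNIV. cnj (v (i, b)) * M (i, b) (j, d) * v (j, d)) = 0 \<and>
        0 \<le> Re (\<Sum>i<n. \<Sum>j<n. \<Sum>b\<in>UNIV. \<Sum>d\<in>UNIV. cnj (v (i, b)) * M (i, b) (j, d) * v (j, d))"
      unfolding eq using psdJ unfolding psd_def by (rule spec)
  qed
  then have pa: "psd_anc n (id_tensor \<Lambda> M)"
    by (rule cp)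
  have TM: "\<And>i j b d. id_tensor \<Lambda> M (i,b) (j,d) = id_tensor \<Lambda> J (h i, b) (h j, d)"
    by (simp add: id_tensor_def M_def)
  show "psd (id_tensor \<Lambda> J)"
    unfolding psd_def
  proof (intro allI)
    fix v :: "'a2 \<times> 'b2 \<Rightarrow> complex"
    define v' where "v' = (\<lambda>(i,b). v (h i, b))"
    have "(\<Sum>p\<in>UNIV. \<Sum>q\<in>UNIV. cnj (v p) * id_tensor \<Lambda> J p q * v q)
       = (\<Sum>x\<in>UNIV. \<Sum>y\<in>UNIV. \<Sum>b\<in>UNIV. \<Sum>d\<in>UNIV. cnj (v (x,b)) * id_tensor \<Lambda> J (x,b) (y,d) * v (y,d))"
      by (rule psd_form)
    also have "\<dots> = (\<Sum>i<n. \<Sum>y\<in>UNIV. \<Sum>b\<in>UNIV. \<Sum>d\<in>UNIV. cnj (v (h i,b)) * id_tensor \<Lambda> J (h i,b) (y,d) * v (y,d))"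
      by (rule reidx[OF h, where f="\<lambda>x. \<Sum>y\<in>UNIV. \<Sum>b\<in>UNIV. \<Sum>d\<in>UNIV. cnj (v (x,b)) * id_tensor \<Lambda> J (x,b) (y,d) * v (y,d)", symmetric])
    also have "\<dots> = (\<Sum>i<n. \<Sum>j<n. \<Sum>b\<in>UNIV. \<Sum>d\<in>UNIV. cnj (v (h i,b)) * id_tensor \<Lambda> J (h i,b) (h j,d) * v (h j,d))"
      apply (rule sum.cong[OF refl])
      subgoal for i by (rule reidx[OF h, where f="\<lambda>y. \<Sum>b\<in>UNIV. \<Sum>d\<in>UNIV. cnj (v (h i,b)) * id_tensor \<Lambda> J (h i,b) (y,d) * v (y,d)", symmetric])
      done
    also have "\<dots> = (\<Sum>i<n. \<Sum>j<n. \<Sum>b\<in>UNIV. \<Sum>d\<in>UNIV. cnj (v' (i,b)) * id_tensor \<Lambda> M (i,b) (j,d) * v' (j,d))"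
      by (simp add: v'_def TM)
    finally have eq: "(\<Sum>p\<in>UNIV. \<Sum>q\<in>UNIV. cnj (v p) * id_tensor \<Lambda> J p q * v q)
       = (\<Sum>i<n. \<Sum>j<n. \<Sum>b\<in>UNIV. \<Sum>d\<in>UNIV. cnj (v' (i,b)) * id_tensor \<Lambda> M (i,b) (j,d) * v' (j,d))" .
    show "Im (\<Sum>p\<in>UNIV. \<Sum>q\<in>UNIV. cnj (v p) * id_tensor \<Lambda> J p q * v q) = 0 \<and>
          0 \<le> Re (\<Sum>p\<in>UNIV. \<Sum>q\<in>UNIV. cnj (v p) * id_tensor \<Lambda> J p q * v q)"
      unfolding eq using pa unfolding psd_anc_def by (rule spec)
  qed
qed
theorem mainTheorem3:
  fixes \<xi>g \<xi>t :: "'a::finite \<times> 'a2::finite \<Rightarrow> complex"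
    and W :: "('a \<times> 'b::finite) cmat \<Rightarrow> real"
    and What :: "('a \<times> 'b2::finite) cmat \<Rightarrow> real"
    and P :: "'c::finite \<Rightarrow> ('a \<times> 'b) cmat"
    and P' :: "'c \<Rightarrow> ('a \<times> 'b2) cmat"
    and \<Lambda> :: "'b cmat \<Rightarrow> 'b2 cmat"
    and \<gamma> :: real and dA :: nat and \<kappa> :: nat
    and \<theta>1 \<theta>2 :: real and F :: "'c set"
    and MA :: "'a cmat" and PiB :: "'b cmat" and PiB' :: "'b2 cmat"
    and g qhon :: "'c \<Rightarrow> real" and \<alpha> :: real
  assumes xig: "pure_state \<xi>g" and xit: "pure_state \<xi>t"
    and gamma: "0 < \<gamma>" "\<gamma> \<le> 1"
    and dA: "dA \<ge> 1" and kappa: "\<kappa> \<in> {1, 2}"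
    and povmP: "is_povm P"
    and Lam: "cptp \<Lambda>"
    and povmP': "is_povm P'"
    and a: "\<And>\<rho> c. is_state \<rho> \<Longrightarrow> Phi P' (id_tensor \<Lambda> \<rho>) c = Phi P \<rho> c"
    and MA: "is_povm_element MA"
    and PiB: "is_projector PiB" and PiB': "is_projector PiB'"
    and bcompat: "\<And>\<rho>. is_state \<rho> \<Longrightarrow>
        trace (mmult (kron MA PiB') (id_tensor \<Lambda> \<rho>)) = trace (mmult (kron MA PiB) \<rho>)"
    and bineq: "\<And>\<rho>. is_state \<rho> \<Longrightarrow>
        (\<Sum>c\<in>F. Phi P \<rho> c) \<ge> \<theta>1 * (\<theta>2 - Re (trace (mmult (kron MA PiB) \<rho>)))"
    and c: "\<And>J. is_choi (J :: ('a2 \<times> 'b) cmat) \<Longrightarrow>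
        What (rhoJ \<xi>g (id_tensor \<Lambda> J)) \<le> W (rhoJ \<xi>g J)"
    and qhon: "is_distribution qhon"
    and alpha: "1 < \<alpha>" "\<alpha> < 3 / 2"
  shows "(INF J\<in>{J :: ('a2 \<times> 'b) cmat. is_choi J}.
            ereal (W (rhoJ \<xi>g J)
                   + (\<Sum>c\<in>UNIV. g c * (qhon c - Phi P (rhoJ \<xi>t J) c))
                   - c_alpha \<alpha> * Vtilde \<gamma> dA \<kappa> (Phi P (rhoJ \<xi>t J)) g))
         \<ge> (INF J'\<in>{J' :: ('a2 \<times> 'b2) cmat. psd J' \<and> ptrace_snd J' = idm \<and>
                 (\<Sum>c\<in>F. Phi P' (rhoJ \<xi>t J') c)
                   \<ge> \<theta>1 * (\<theta>2 - Re (trace (mmult (kron MA PiB') (rhoJ \<xi>t J'))))}.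
            ereal (What (rhoJ \<xi>g J')
                   + (\<Sum>c\<in>UNIV. g c * (qhon c - Phi P' (rhoJ \<xi>t J') c))
                   - c_alpha \<alpha> * Vtilde \<gamma> dA \<kappa> (Phi P' (rhoJ \<xi>t J')) g))"
proof -
  have lin: "linear_map \<Lambda>" using Lam unfolding cptp_def by simp
  have key: "\<exists>J'\<in>{J' :: ('a2 \<times> 'b2) cmat. psd J' \<and> ptrace_snd J' = idm \<and>
                 (\<Sum>c\<in>F. Phi P' (rhoJ \<xi>t J') c)
                   \<ge> \<theta>1 * (\<theta>2 - Re (trace (mmult (kron MA PiB') (rhoJ \<xi>t J'))))}.
            ereal (What (rhoJ \<xi>g J')
                   + (\<Sum>c\<in>UNIV. g c * (qhon c - Phi P' (rhoJ \<xi>t J') c))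
                   - c_alpha \<alpha> * Vtilde \<gamma> dA \<kappa> (Phi P' (rhoJ \<xi>t J')) g)
          \<le> ereal (W (rhoJ \<xi>g J)
                   + (\<Sum>c\<in>UNIV. g c * (qhon c - Phi P (rhoJ \<xi>t J) c))
                   - c_alpha \<alpha> * Vtilde \<gamma> dA \<kappa> (Phi P (rhoJ \<xi>t J)) g)"
    if J: "J \<in> {J :: ('a2 \<times> 'b) cmat. is_choi J}" for J
  proof -
    have choi: "is_choi J" using J by simp
    define J' where "J' = id_tensor \<Lambda> J"
    have ct: "psd J' \<and> ptrace_snd J' = idm" unfolding J'_def by (rule choi_tensor[OF Lam choi])
    have rt: "rhoJ \<xi>t J' = id_tensor \<Lambda> (rhoJ \<xi>t J)" unfolding J'_def by (rule rho_commute[OF lin])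
    have rg: "rhoJ \<xi>g J' = rhoJ \<xi>g (id_tensor \<Lambda> J)" unfolding J'_def ..
    have st: "is_state (rhoJ \<xi>t J)"
      unfolding is_state_def
      using psd_rho[of J \<xi>t] trace_rho[OF xit, of J] choi unfolding is_choi_def by simp
    have ph: "Phi P' (rhoJ \<xi>t J') = Phi P (rhoJ \<xi>t J)"
      unfolding rt by (rule ext) (rule a[OF st])
    have tr: "trace (mmult (kron MA PiB') (rhoJ \<xi>t J')) = trace (mmult (kron MA PiB) (rhoJ \<xi>t J))"
      unfolding rt by (rule bcompat[OF st])
    have cons: "(\<Sum>c\<in>F. Phi P' (rhoJ \<xi>t J') c)
                   \<ge> \<theta>1 * (\<theta>2 - Re (trace (mmult (kron MA PiB') (rhoJ \<xi>t J'))))"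
      unfolding ph tr by (rule bineq[OF st])
    have w: "What (rhoJ \<xi>g J') \<le> W (rhoJ \<xi>g J)" unfolding rg by (rule c[OF choi])
    show ?thesis
    proof (rule bexI[where x=J'])
      show "J' \<in> {J' :: ('a2 \<times> 'b2) cmat. psd J' \<and> ptrace_snd J' = idm \<and>
                 (\<Sum>c\<in>F. Phi P' (rhoJ \<xi>t J') c)
                   \<ge> \<theta>1 * (\<theta>2 - Re (trace (mmult (kron MA PiB') (rhoJ \<xi>t J'))))}"
        using ct cons by simp
      show "ereal (What (rhoJ \<xi>g J')
                   + (\<Sum>c\<in>UNIV. g c * (qhon c - Phi P' (rhoJ \<xi>t J') c))
                   - c_alpha \<alpha> * Vtilde \<gamma> dA \<kappa> (Phi P' (rhoJ \<xi>t J')) g)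
          \<le> ereal (W (rhoJ \<xi>g J)
                   + (\<Sum>c\<in>UNIV. g c * (qhon c - Phi P (rhoJ \<xi>t J) c))
                   - c_alpha \<alpha> * Vtilde \<gamma> dA \<kappa> (Phi P (rhoJ \<xi>t J)) g)"
        unfolding ph using w by simp
    qed
  qed
  show ?thesis by (rule INF_mono) (rule key)
qed

end
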